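(* Let $\tau\ge1$ be an integer. A hypergraph $H=(\mathcal{V},\mathcal{E})$ is inherently $\tau$-connected if and only if for every partition $\mathscr{P}$ of $\mathcal{V}$ into nonempty disjoint sets $\mathcal{V}_1,\dots,\mathcal{V}_{|\mathscr{P}|}$, $$\sum_{e\in\mathcal{E}}\big(r(e;\mathscr{P})-1\big)\ge\tau(|\mathscr{P}|-1),$$ where $r(e;\mathscr{P})$ is the number of parts of $\mathscr{P}$ that the hyperedge $e$ intersects.
   Context: Hypergraphs may have repeated hyperedges; each hyperedge is a nonempty subset of $\mathcal{V}$. A multigraph $G=(\mathcal{V},\mathcal{E}_M)$ is induced by the hypergraph $H=(\mathcal{V},\mathcal{E})$ if its edge multiset decomposes as a disjoint union of edge sets of simple graphs $G_e=(e,E_e)$, $e\in\mathcal{E}$, where each $G_e$ is a connected simple graph on the vertex set $e$. $H$ is inherently $\tau$-connected if every multigraph induced by $H$ contains at least $\tau$ edge-disjoint spanning trees. *)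

theory Defs
  imports Main
begin

text \<open>A (multi)graph is given by a set of edge labels X and an endpoint map
  ends :: 'x \<Rightarrow> 'v set (each value a 2-element set of vertices).\<close>

definition adj :: "('x \<Rightarrow> 'v set) \<Rightarrow> 'x set \<Rightarrow> 'v \<Rightarrow> 'v \<Rightarrow> bool" where
  "adj ends X a b \<longleftrightarrow> (\<exists>x\<in>X. ends x = {a, b})"

definition graph_connected :: "'v set \<Rightarrow> ('x \<Rightarrow> 'v set) \<Rightarrow> 'x set \<Rightarrow> bool" where
  "graph_connected V ends X \<longleftrightarrow>
     (\<forall>x\<in>X. ends x \<subseteq> V) \<and> (\<forall>u\<in>V. \<forall>v\<in>V. (adj ends X)\<^sup>*\<^sup>* u v)"

definition acyclic_edges :: "('x \<Rightarrow> 'v set) \<Rightarrow> 'x set \<Rightarrow> bool" where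
  "acyclic_edges ends X \<longleftrightarrow>
     (\<forall>x\<in>X. \<forall>a b. ends x = {a, b} \<longrightarrow> \<not> (adj ends (X - {x}))\<^sup>*\<^sup>* a b)"

definition spanning_tree :: "'v set \<Rightarrow> ('x \<Rightarrow> 'v set) \<Rightarrow> 'x set \<Rightarrow> 'x set \<Rightarrow> bool" where
  "spanning_tree V ends M T \<longleftrightarrow> T \<subseteq> M \<and> graph_connected V ends T \<and> acyclic_edges ends T"

definition has_disjoint_spanning_trees :: "nat \<Rightarrow> 'v set \<Rightarrow> ('x \<Rightarrow> 'v set) \<Rightarrow> 'x set \<Rightarrow> bool" where
  "has_disjoint_spanning_trees \<tau> V ends M \<longleftrightarrow>
     (\<exists>Ts :: nat \<Rightarrow> 'x set. (\<forall>k<\<tau>. spanning_tree V ends M (Ts k)) \<and>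
        (\<forall>k<\<tau>. \<forall>l<\<tau>. k \<noteq> l \<longrightarrow> Ts k \<inter> Ts l = {}))"

definition simple_edges :: "'v set \<Rightarrow> 'v set set" where
  "simple_edges e = {p. \<exists>u v. p = {u, v} \<and> u \<noteq> v \<and> u \<in> e \<and> v \<in> e}"

text \<open>A hypergraph with repeated hyperedges: vertex set V, finite index set I of
  hyperedges, hyperedge map f. Hyperedges are nonempty subsets of V.\<close>
definition hypergraph :: "'v set \<Rightarrow> 'i set \<Rightarrow> ('i \<Rightarrow> 'v set) \<Rightarrow> bool" where
  "hypergraph V I f \<longleftrightarrow> finite V \<and> finite I \<and> (\<forall>i\<in>I. f i \<noteq> {} \<and> f i \<subseteq> V)"

text \<open>An induced multigraph is determined by choosing, for every hyperedge i, a
  connected simple graph G_i = (f i, Es i); its edge multiset is the disjoint union,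
  realised as labelled edges (i, p) with p in Es i and endpoints p.\<close>
definition induced_choice :: "'i set \<Rightarrow> ('i \<Rightarrow> 'v set) \<Rightarrow> ('i \<Rightarrow> 'v set set) \<Rightarrow> bool" where
  "induced_choice I f Es \<longleftrightarrow>
     (\<forall>i\<in>I. Es i \<subseteq> simple_edges (f i) \<and> graph_connected (f i) id (Es i))"

definition inherently_connected :: "nat \<Rightarrow> 'v set \<Rightarrow> 'i set \<Rightarrow> ('i \<Rightarrow> 'v set) \<Rightarrow> bool" where
  "inherently_connected \<tau> V I f \<longleftrightarrow>
     (\<forall>Es. induced_choice I f Es \<longrightarrow>
        has_disjoint_spanning_trees \<tau> V snd (SIGMA i:I. Es i))"

definition is_partition :: "'v set \<Rightarrow> 'v set set \<Rightarrow> bool" where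
  "is_partition V P \<longleftrightarrow> \<Union>P = V \<and> {} \<notin> P \<and> (\<forall>A\<in>P. \<forall>B\<in>P. A \<noteq> B \<longrightarrow> A \<inter> B = {})"

definition parts_met :: "'v set \<Rightarrow> 'v set set \<Rightarrow> nat" where
  "parts_met e P = card {B\<in>P. B \<inter> e \<noteq> {}}"

end

theory Submission
  imports Defs
begin


abbreviation conn :: "('x \<Rightarrow> 'v set) \<Rightarrow> 'x set \<Rightarrow> 'v \<Rightarrow> 'v \<Rightarrow> bool" where
  "conn ends X \<equiv> (adj ends X)\<^sup>*\<^sup>*"

definition wfe :: "'v set \<Rightarrow> ('x \<Rightarrow> 'v set) \<Rightarrow> 'x set \<Rightarrow> bool" where
  "wfe W ends X \<longleftrightarrow> (\<forall>x\<in>X. \<exists>a b. ends x = {a,b} \<and> a \<in> W \<and> b \<in> W)"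

definition cls :: "'v set \<Rightarrow> ('x \<Rightarrow> 'v set) \<Rightarrow> 'x set \<Rightarrow> 'v \<Rightarrow> 'v set" where
  "cls W ends X v = {u\<in>W. conn ends X v u}"

definition comps :: "'v set \<Rightarrow> ('x \<Rightarrow> 'v set) \<Rightarrow> 'x set \<Rightarrow> nat" where
  "comps W ends X = card (cls W ends X ` W)"

lemma adj_sym: "adj ends X a b \<Longrightarrow> adj ends X b a"
  unfolding adj_def by (auto simp: insert_commute)

lemma conn_sym: "conn ends X a b \<Longrightarrow> conn ends X b a"
proof (induction rule: rtranclp_induct)
  case base then show ?case by simp
next
  case (step y z)
  then show ?case by (meson adj_sym converse_rtranclp_into_rtranclp)
qed

lemma adj_mono: "X \<subseteq> Y \<Longrightarrow> adj ends X a b \<Longrightarrow> adj ends Y a b"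
  unfolding adj_def by auto

lemma conn_mono: "X \<subseteq> Y \<Longrightarrow> conn ends X a b \<Longrightarrow> conn ends Y a b"
  by (metis adj_mono mono_rtranclp)

lemma conn_insert_D:
  assumes e: "ends e = {a,b}" and "conn ends (insert e X) u v"
  shows "conn ends X u v \<or> (conn ends X u a \<and> conn ends X b v) \<or> (conn ends X u b \<and> conn ends X a v)"
  using assms(2)
proof (induction rule: rtranclp_induct)
  case base then show ?case by simp
next
  case (step w v)
  from step.hyps(2) obtain x where x: "x \<in> insert e X" "ends x = {w, v}" unfolding adj_def by auto
  show ?case
  proof (cases "x \<in> X")
    case True
    then have "adj ends X w v" unfolding adj_def using x by auto
    then show ?thesis using step.IH by (meson rtranclp.rtrancl_into_rtrancl)
  next
    case False
    then have "x = e" using x by auto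
    then have "(w = a \<and> v = b) \<or> (w = b \<and> v = a)" using x e by (auto simp: doubleton_eq_iff)
    then show ?thesis using step.IH by (metis conn_sym rtranclp.rtrancl_refl rtranclp_trans)
  qed
qed

lemma conn_insert_I:
  assumes e: "ends e = {a,b}"
    and "conn ends X u v \<or> (conn ends X u a \<and> conn ends X b v) \<or> (conn ends X u b \<and> conn ends X a v)"
  shows "conn ends (insert e X) u v"
proof -
  have ab: "adj ends (insert e X) a b" "adj ends (insert e X) b a" using e unfolding adj_def by (auto simp: insert_commute)
  have m: "\<And>p q. conn ends X p q \<Longrightarrow> conn ends (insert e X) p q" by (rule conn_mono[of X]) auto
  show ?thesis using assms(2) ab m by (meson rtranclp.rtrancl_into_rtrancl rtranclp_trans)
qed

lemma conn_insert_iff: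
  assumes e: "ends e = {a,b}"
  shows "conn ends (insert e X) u v \<longleftrightarrow> conn ends X u v \<or> (conn ends X u a \<and> conn ends X b v) \<or> (conn ends X u b \<and> conn ends X a v)"
  using conn_insert_D[where ends=ends and e=e and a=a and b=b, OF e] conn_insert_I[where ends=ends and e=e and a=a and b=b, OF e] by blast

lemma conn_insert_same:
  assumes e: "ends e = {a,b}" and c: "conn ends X a b"
  shows "conn ends (insert e X) = conn ends X"
  using conn_insert_iff[where ends=ends and e=e and a=a and b=b, OF e] c by (intro ext) (meson conn_sym rtranclp_trans)

lemma conn_in_W:
  assumes "wfe W ends X" "u \<in> W" "conn ends X u v" shows "v \<in> W"
  using assms(3,2)
proof (induction rule: rtranclp_induct)
  case base then show ?case by simp
next
  case (step w v)
  then obtain x where "x \<in> X" "ends x = {w,v}" unfolding adj_def by auto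
  with assms(1) show ?case unfolding wfe_def by (metis insert_iff singletonD)
qed

lemma cls_eq:
  assumes "conn ends X v u" shows "cls W ends X v = cls W ends X u"
  unfolding cls_def using assms by (meson conn_sym rtranclp_trans)

lemma comps_empty: "comps W ends {} = card W"
proof -
  have "adj ends {} = (\<lambda>a b. False)" unfolding adj_def by auto
  have r: "(\<lambda>a b. False)\<^sup>*\<^sup>* v x \<longleftrightarrow> x = v" for v x :: 'v
    by (auto elim: rtranclp.cases)
  have "cls W ends {} v = (if v \<in> W then {v} else {})" for v unfolding cls_def \<open>adj ends {} = _\<close> r by auto
  then have "cls W ends {} ` W = (\<lambda>v. {v}) ` W" by auto
  then show ?thesis unfolding comps_def by (simp add: card_image)
qed

lemma comps_insert_same:
  assumes e: "ends e = {a,b}" and c: "conn ends X a b"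
  shows "comps W ends (insert e X) = comps W ends X"
  unfolding comps_def cls_def conn_insert_same[OF e c] ..

lemma comps_insert_new:
  assumes fin: "finite W" and e: "ends e = {a,b}" and ab: "a \<in> W" "b \<in> W" and nc: "\<not> conn ends X a b"
  shows "comps W ends X = Suc (comps W ends (insert e X))"
proof -
  let ?C = "conn ends X" and ?C' = "conn ends (insert e X)"
  define A where "A = cls W ends X a"
  define B where "B = cls W ends X b"
  have memcls: "v \<in> cls W ends X u \<longleftrightarrow> v \<in> W \<and> ?C u v" for u v unfolding cls_def by auto
  have cl': "cls W ends (insert e X) v = (if v \<in> A \<union> B then A \<union> B else cls W ends X v)" if "v \<in> W" for v
  proof (cases "v \<in> A \<union> B")
    case True
    show ?thesis
    proof (cases "v \<in> A")
      case True
      then have "?C a v" using A_def memcls by auto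
      then have "\<not> ?C v b" using nc by (meson rtranclp_trans)
      have va: "?C v a" using \<open>?C a v\<close> conn_sym by metis
      have "?C v u \<longleftrightarrow> ?C a u" for u using va \<open>?C a v\<close> by (meson rtranclp_trans)
      then show ?thesis using \<open>v\<in>A\<close> va \<open>\<not> ?C v b\<close> unfolding cls_def A_def B_def conn_insert_iff[where ends=ends and e=e and a=a and b=b, OF e]
        by auto
    next
      case False
      then have "v \<in> B" using True by auto
      then have "?C b v" using B_def memcls by auto
      then have "\<not> ?C v a" using nc by (meson conn_sym rtranclp_trans)
      have vb: "?C v b" using \<open>?C b v\<close> conn_sym by metis
      have "?C v u \<longleftrightarrow> ?C b u" for u using vb \<open>?C b v\<close> by (meson rtranclp_trans)
      then show ?thesis using \<open>v\<in>B\<close> vb \<open>\<not> ?C v a\<close> unfolding cls_def A_def B_def conn_insert_iff[where ends=ends and e=e and a=a and b=b, OF e]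
        by auto
    qed
  next
    case False
    then have "\<not> ?C a v" "\<not> ?C b v" using that memcls A_def B_def by auto
    then have "\<not> ?C v a" "\<not> ?C v b" using conn_sym by metis+
    then show ?thesis using False unfolding cls_def conn_insert_iff[where ends=ends and e=e and a=a and b=b, OF e] by auto
  qed
  have AB: "A \<noteq> B" using memcls A_def B_def ab nc by (metis rtranclp.rtrancl_refl)
  have Ain: "A \<in> cls W ends X ` W" "B \<in> cls W ends X ` W" using ab A_def B_def by auto
  have Kab: "cls W ends X v \<in> {A, B}" if "v \<in> A \<union> B" for v
    using that cls_eq memcls A_def B_def by (metis Un_iff insertCI)
  have eq: "cls W ends (insert e X) ` W = insert (A \<union> B) (cls W ends X ` W - {A, B})"
  proof
    show "cls W ends (insert e X) ` W \<subseteq> insert (A \<union> B) (cls W ends X ` W - {A, B})"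
    proof
      fix K assume "K \<in> cls W ends (insert e X) ` W"
      then obtain v where v: "v \<in> W" "K = cls W ends (insert e X) v" by auto
      show "K \<in> insert (A \<union> B) (cls W ends X ` W - {A, B})"
      proof (cases "v \<in> A \<union> B")
        case True then show ?thesis using v cl' by auto
      next
        case False
        have "v \<in> cls W ends X v" using v memcls by auto
        then have "cls W ends X v \<noteq> A" "cls W ends X v \<noteq> B" using False by auto
        then show ?thesis using v cl' False by auto
      qed
    qed
  next
    show "insert (A \<union> B) (cls W ends X ` W - {A, B}) \<subseteq> cls W ends (insert e X) ` W"
    proof
      fix K assume K: "K \<in> insert (A \<union> B) (cls W ends X ` W - {A, B})"
      show "K \<in> cls W ends (insert e X) ` W"
      proof (cases "K = A \<union> B")
        case True
        have "a \<in> A" using A_def memcls ab by auto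
        then show ?thesis using True cl'[OF ab(1)] ab by (auto intro!: image_eqI[where x=a])
      next
        case False
        then obtain v where v: "v \<in> W" "K = cls W ends X v" "K \<noteq> A" "K \<noteq> B" using K by auto
        then have "v \<notin> A \<union> B" using Kab[of v] by auto
        then show ?thesis using v cl' by auto
      qed
    qed
  qed
  have nin: "A \<union> B \<notin> cls W ends X ` W - {A, B}"
  proof
    assume "A \<union> B \<in> cls W ends X ` W - {A, B}"
    then obtain v where v: "v \<in> W" "A \<union> B = cls W ends X v" "A \<union> B \<noteq> A" by auto
    have "a \<in> A" using A_def memcls ab by auto
    then have "a \<in> cls W ends X v" using v by auto
    then have "cls W ends X v = A" using A_def cls_eq memcls by metis
    then show False using v by auto
  qed
  have finC: "finite (cls W ends X ` W)" using fin by auto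
  have "card (cls W ends X ` W - {A, B}) = card (cls W ends X ` W) - 2"
    using Ain AB finC by (simp add: card_Diff_subset)
  moreover have "card (cls W ends X ` W) \<ge> 2"
  proof -
    have "{A,B} \<subseteq> cls W ends X ` W" using Ain by auto
    then have "card {A,B} \<le> card (cls W ends X ` W)" using finC by (rule card_mono[rotated])
    then show ?thesis using AB by simp
  qed
  ultimately show ?thesis unfolding comps_def eq using nin finC by (simp add: card_insert_if)
qed


lemma comps_le_card: "finite W \<Longrightarrow> comps W ends X \<le> card W"
  unfolding comps_def by (rule card_image_le)

lemma comps_pos: "finite W \<Longrightarrow> W \<noteq> {} \<Longrightarrow> comps W ends X \<ge> 1"
  unfolding comps_def by (simp add: Suc_leI card_gt_0_iff)

lemma comps_union_ge:
  assumes "finite X" "finite W" "wfe W ends X"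
  shows "comps W ends A \<le> comps W ends (A \<union> X) + card X"
  using assms
proof (induction X rule: finite_induct)
  case empty then show ?case by simp
next
  case (insert x X)
  then have w: "wfe W ends X" unfolding wfe_def by auto
  from insert.prems obtain a b where ab: "ends x = {a,b}" "a \<in> W" "b \<in> W" unfolding wfe_def by auto
  have eq: "A \<union> insert x X = insert x (A \<union> X)" by auto
  have "comps W ends (A \<union> X) \<le> comps W ends (insert x (A \<union> X)) + 1"
  proof (cases "conn ends (A \<union> X) a b")
    case True then show ?thesis using comps_insert_same[OF ab(1) True] by simp
  next
    case False then show ?thesis using comps_insert_new[OF insert.prems(1) ab(1) ab(2,3) False] by simp
  qed
  then show ?case using insert.IH[OF insert.prems(1) w] insert.hyps eq by simp
qed

lemma acyclic_subset: "acyclic_edges ends X \<Longrightarrow> Y \<subseteq> X \<Longrightarrow> acyclic_edges ends Y"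
  unfolding acyclic_edges_def by (meson Diff_mono conn_mono order_refl subsetD)

lemma comps_acyclic:
  assumes "finite X" "finite W" "wfe W ends X" "acyclic_edges ends X"
  shows "comps W ends X + card X = card W"
  using assms
proof (induction X rule: finite_induct)
  case empty then show ?case by (simp add: comps_empty)
next
  case (insert x X)
  then have w: "wfe W ends X" unfolding wfe_def by auto
  have ac: "acyclic_edges ends X" using acyclic_subset insert.prems(3) by blast
  from insert.prems obtain a b where ab: "ends x = {a,b}" "a \<in> W" "b \<in> W" unfolding wfe_def by auto
  have "\<not> conn ends (insert x X - {x}) a b" using insert.prems(3) ab(1) unfolding acyclic_edges_def by blast
  then have nc: "\<not> conn ends X a b" using insert.hyps by simp
  show ?case using comps_insert_new[OF insert.prems(1) ab(1) ab(2,3) nc] insert.IH[OF insert.prems(1) w ac] insert.hyps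
    by simp
qed

lemma comps_connected:
  assumes "W \<noteq> {}" "graph_connected W ends X" shows "comps W ends X = 1"
proof -
  have "cls W ends X v = W" if "v \<in> W" for v
    using assms(2) that unfolding graph_connected_def cls_def by auto
  then have "cls W ends X ` W = {W}" using assms(1) by auto
  then show ?thesis unfolding comps_def by simp
qed

lemma comps_one_connected:
  assumes "W \<noteq> {}" "wfe W ends X" "comps W ends X = 1" shows "graph_connected W ends X"
proof -
  obtain K where K: "cls W ends X ` W = {K}" using assms(3) unfolding comps_def by (meson card_1_singletonE)
  have "conn ends X u v" if "u \<in> W" "v \<in> W" for u v
  proof -
    have "cls W ends X u \<in> {K}" "cls W ends X v \<in> {K}" using K that by (metis imageI)+
    then have "cls W ends X u = cls W ends X v" by simp
    moreover have "v \<in> cls W ends X v" using that unfolding cls_def by auto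
    ultimately show ?thesis unfolding cls_def by auto
  qed
  moreover have "\<forall>x\<in>X. ends x \<subseteq> W" using assms(2) unfolding wfe_def by auto
  ultimately show ?thesis unfolding graph_connected_def by auto
qed


lemma conn_stays:
  assumes disj: "\<forall>A\<in>P. \<forall>B\<in>P. A \<noteq> B \<longrightarrow> A \<inter> B = {}"
    and inS: "\<forall>x\<in>S. \<exists>B\<in>P. ends x \<subseteq> B"
    and "conn ends S u v" "u \<in> B" "B \<in> P"
  shows "v \<in> B"
  using assms(3,4)
proof (induction rule: rtranclp_induct)
  case base then show ?case by simp
next
  case (step w v)
  then obtain x where x: "x \<in> S" "ends x = {w,v}" unfolding adj_def by auto
  then obtain B' where B': "B' \<in> P" "{w,v} \<subseteq> B'" using inS by metis
  then have "B' = B" using disj step assms(5) by blast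
  then show ?case using B' by auto
qed

lemma cross_bound:
  assumes fin: "finite W" and ne: "W \<noteq> {}" and finS: "finite S" and w: "wfe W ends S"
    and gc: "graph_connected W ends S"
    and disj: "\<forall>A\<in>P. \<forall>B\<in>P. A \<noteq> B \<longrightarrow> A \<inter> B = {}" and cov: "W \<subseteq> \<Union>P"
  shows "card {B\<in>P. B \<inter> W \<noteq> {}} \<le> card {x\<in>S. \<not>(\<exists>B\<in>P. ends x \<subseteq> B)} + 1"
proof -
  define Sin where "Sin = {x\<in>S. \<exists>B\<in>P. ends x \<subseteq> B}"
  define Sc where "Sc = {x\<in>S. \<not>(\<exists>B\<in>P. ends x \<subseteq> B)}"
  have SU: "S = Sin \<union> Sc" unfolding Sin_def Sc_def by auto
  have wc: "wfe W ends Sc" using w unfolding wfe_def Sc_def by auto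
  have "comps W ends Sin \<le> comps W ends (Sin \<union> Sc) + card Sc"
    by (rule comps_union_ge) (use finS fin wc in \<open>auto simp: Sc_def\<close>)
  then have c1: "comps W ends Sin \<le> 1 + card Sc" using comps_connected[OF ne gc] SU by simp
  define g where "g B = cls W ends Sin (SOME v. v \<in> B \<inter> W)" for B
  have gv: "(SOME v. v \<in> B \<inter> W) \<in> B \<inter> W" if "B \<inter> W \<noteq> {}" for B
    using that by (meson all_not_in_conv someI_ex)
  have inS: "\<forall>x\<in>Sin. \<exists>B\<in>P. ends x \<subseteq> B" unfolding Sin_def by auto
  have "inj_on g {B\<in>P. B \<inter> W \<noteq> {}}"
  proof (rule inj_onI)
    fix B1 B2 assume B1: "B1 \<in> {B\<in>P. B \<inter> W \<noteq> {}}" and B2: "B2 \<in> {B\<in>P. B \<inter> W \<noteq> {}}" and eq: "g B1 = g B2"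
    define v1 where "v1 = (SOME v. v \<in> B1 \<inter> W)"
    define v2 where "v2 = (SOME v. v \<in> B2 \<inter> W)"
    have v1: "v1 \<in> B1 \<inter> W" using gv B1 v1_def by auto
    have v2: "v2 \<in> B2 \<inter> W" using gv B2 v2_def by auto
    have "v2 \<in> cls W ends Sin v2" using v2 unfolding cls_def by auto
    then have "v2 \<in> cls W ends Sin v1" using eq unfolding g_def v1_def v2_def by simp
    then have "conn ends Sin v1 v2" unfolding cls_def by auto
    then have "v2 \<in> B1" using conn_stays[OF disj inS] v1 B1 by blast
    then show "B1 = B2" using v2 B1 B2 disj by blast
  qed
  moreover have "g ` {B\<in>P. B \<inter> W \<noteq> {}} \<subseteq> cls W ends Sin ` W"
    unfolding g_def using gv by auto
  moreover have "finite (cls W ends Sin ` W)" using fin by auto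
  ultimately have "card {B\<in>P. B \<inter> W \<noteq> {}} \<le> comps W ends Sin"
    unfolding comps_def by (meson card_inj_on_le)
  then show ?thesis using c1 unfolding Sc_def by simp
qed


lemma adj_conn: assumes "x \<in> X" "ends x = {c,d}" shows "conn ends X c d"
proof -
  have "adj ends X c d" unfolding adj_def using assms by blast
  then show ?thesis by (rule r_into_rtranclp)
qed

lemma add_acyclic:
  assumes ac: "acyclic_edges ends T" and e: "ends e = {a,b}" and nc: "\<not> conn ends T a b" and eT: "e \<notin> T"
  shows "acyclic_edges ends (insert e T)"
  unfolding acyclic_edges_def
proof (intro ballI allI impI)
  fix x c d assume x: "x \<in> insert e T" and xe: "ends x = {c,d}"
  show "\<not> conn ends (insert e T - {x}) c d"
  proof (cases "x = e")
    case True
    then have "insert e T - {x} = T" using eT by auto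
    moreover have "(c = a \<and> d = b) \<or> (c = b \<and> d = a)" using True xe e by (auto simp: doubleton_eq_iff)
    ultimately show ?thesis using nc conn_sym by metis
  next
    case False
    then have xT: "x \<in> T" using x by auto
    have eq: "insert e T - {x} = insert e (T - {x})" using False by auto
    have n1: "\<not> conn ends (T - {x}) c d" using ac xT xe unfolding acyclic_edges_def by blast
    have sub: "\<And>p q. conn ends (T - {x}) p q \<Longrightarrow> conn ends T p q" by (rule conn_mono) auto
    have cd: "conn ends T c d" "conn ends T d c" using adj_conn[of x T ends c d, OF xT xe] conn_sym by metis+
    show ?thesis
    proof
      assume "conn ends (insert e T - {x}) c d"
      then have "conn ends (insert e (T - {x})) c d" using eq by simp
      from conn_insert_D[where ends=ends and e=e and a=a and b=b, OF e this] n1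
      have "(conn ends (T - {x}) c a \<and> conn ends (T - {x}) b d) \<or> (conn ends (T - {x}) c b \<and> conn ends (T - {x}) a d)"
        by blast
      then have "conn ends T a b"
      proof
        assume h: "conn ends (T - {x}) c a \<and> conn ends (T - {x}) b d"
        then have "conn ends T a c" "conn ends T d b" using sub conn_sym by metis+
        then show ?thesis using cd by (meson rtranclp_trans)
      next
        assume h: "conn ends (T - {x}) c b \<and> conn ends (T - {x}) a d"
        then have "conn ends T a d" "conn ends T c b" using sub conn_sym by metis+
        then show ?thesis using cd by (meson rtranclp_trans)
      qed
      then show False using nc by simp
    qed
  qed
qed

lemma remove_many:
  assumes ac: "acyclic_edges ends T" and ed: "\<forall>x\<in>T. \<exists>c d. ends x = {c,d}"
    and "finite F" and "\<forall>f\<in>F. conn ends (T - {f}) a b" and "conn ends T a b"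
  shows "conn ends (T - F) a b"
  using assms(3-)
proof (induction F rule: finite_induct)
  case empty then show ?case by simp
next
  case (insert f F)
  have IH: "conn ends (T - F) a b" using insert by simp
  have cf: "conn ends (T - {f}) a b" using insert.prems by simp
  show ?case
  proof (cases "f \<in> T - F")
    case False
    then have "T - insert f F = T - F" by auto
    then show ?thesis using IH by simp
  next
    case True
    then obtain c d where cd: "ends f = {c,d}" using ed by blast
    have eq: "T - F = insert f (T - insert f F)" using True by auto
    have sub: "\<And>p q. conn ends (T - insert f F) p q \<Longrightarrow> conn ends (T - {f}) p q" by (rule conn_mono) auto
    have nc: "\<not> conn ends (T - {f}) c d" using ac True cd unfolding acyclic_edges_def by blast
    show ?thesis
    proof (rule ccontr)
      assume n: "\<not> conn ends (T - insert f F) a b"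
      have "conn ends (insert f (T - insert f F)) a b" using IH eq by simp
      from conn_insert_D[where ends=ends and e=f and a=c and b=d, OF cd this] n
      have "(conn ends (T - insert f F) a c \<and> conn ends (T - insert f F) d b) \<or> (conn ends (T - insert f F) a d \<and> conn ends (T - insert f F) c b)"
        by blast
      then have "conn ends (T - {f}) c d"
      proof
        assume h: "conn ends (T - insert f F) a c \<and> conn ends (T - insert f F) d b"
        then have "conn ends (T - {f}) c a" "conn ends (T - {f}) b d" using sub conn_sym by metis+
        then show ?thesis using cf by (meson rtranclp_trans)
      next
        assume h: "conn ends (T - insert f F) a d \<and> conn ends (T - insert f F) c b"
        then have "conn ends (T - {f}) d a" "conn ends (T - {f}) b c" using sub conn_sym by metis+
        then have "conn ends (T - {f}) d c" using cf by (meson rtranclp_trans)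
        then show ?thesis using conn_sym by metis
      qed
      then show False using nc by simp
    qed
  qed
qed

lemma remove_exists:
  assumes ac: "acyclic_edges ends T" and ed: "\<forall>x\<in>T. \<exists>c d. ends x = {c,d}" and fin: "finite T"
    and c: "conn ends T a b" and nc: "\<not> conn ends {x\<in>T. Q x} a b"
  shows "\<exists>f\<in>T. \<not> Q f \<and> \<not> conn ends (T - {f}) a b"
proof (rule ccontr)
  assume "\<not> ?thesis"
  then have "\<forall>f\<in>{x\<in>T. \<not> Q x}. conn ends (T - {f}) a b" by auto
  from remove_many[OF ac ed _ this c] fin have "conn ends (T - {x\<in>T. \<not> Q x}) a b" by auto
  moreover have "T - {x\<in>T. \<not> Q x} = {x\<in>T. Q x}" by auto
  ultimately show False using nc by simp
qed

lemma swap_conn: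
  assumes e: "ends e = {a,b}" and fT: "f \<in> T" and nf: "\<not> conn ends (T - {f}) a b"
    and Qe: "Q e" and cab: "conn ends {x\<in>T. Q x} a b" and ed: "\<forall>x\<in>T. \<exists>c d. ends x = {c,d}"
  shows "conn ends {x \<in> insert e (T - {f}). Q x} = conn ends {x\<in>T. Q x}"
proof (intro ext iffI)
  fix u v
  let ?S = "{x\<in>T. Q x}" and ?S' = "{x \<in> insert e (T - {f}). Q x}"
  assume "conn ends ?S' u v"
  then have "conn ends (insert e ?S) u v" by (rule conn_mono[rotated]) auto
  then show "conn ends ?S u v" using conn_insert_same[OF e cab] by simp
next
  fix u v
  let ?S = "{x\<in>T. Q x}" and ?S' = "{x \<in> insert e (T - {f}). Q x}"
  assume uv: "conn ends ?S u v"
  show "conn ends ?S' u v"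
  proof (cases "Q f")
    case False
    then have "?S \<subseteq> ?S'" by auto
    then show ?thesis using uv conn_mono by metis
  next
    case True
    obtain c d where cd: "ends f = {c,d}" using ed fT by blast
    have Seq: "?S = insert f (?S - {f})" using True fT by auto
    have sub1: "\<And>p q. conn ends (?S - {f}) p q \<Longrightarrow> conn ends ?S' p q" by (rule conn_mono) auto
    have sub2: "\<And>p q. conn ends (?S - {f}) p q \<Longrightarrow> conn ends (T - {f}) p q" by (rule conn_mono) auto
    have eab: "conn ends ?S' a b" using adj_conn[of e ?S' ends a b] e Qe by auto
    have n2: "\<not> conn ends (?S - {f}) a b" using nf sub2 by blast
    have "conn ends (insert f (?S - {f})) a b" using cab Seq by simp
    from conn_insert_D[where ends=ends and e=f and a=c and b=d, OF cd this] n2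
    have "(conn ends (?S - {f}) a c \<and> conn ends (?S - {f}) d b) \<or> (conn ends (?S - {f}) a d \<and> conn ends (?S - {f}) c b)"
      by blast
    then have ccd: "conn ends ?S' c d"
    proof
      assume h: "conn ends (?S - {f}) a c \<and> conn ends (?S - {f}) d b"
      then have "conn ends ?S' c a" "conn ends ?S' b d" using sub1 conn_sym by metis+
      then show ?thesis using eab by (meson rtranclp_trans)
    next
      assume h: "conn ends (?S - {f}) a d \<and> conn ends (?S - {f}) c b"
      then have "conn ends ?S' d a" "conn ends ?S' b c" using sub1 conn_sym by metis+
      then have "conn ends ?S' d c" using eab by (meson rtranclp_trans)
      then show ?thesis using conn_sym by metis
    qed
    have ccd': "conn ends ?S' d c" using ccd conn_sym by metis
    have "conn ends (insert f (?S - {f})) u v" using uv Seq by simp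
    from conn_insert_D[where ends=ends and e=f and a=c and b=d, OF cd this]
    have "conn ends (?S - {f}) u v \<or> (conn ends (?S - {f}) u c \<and> conn ends (?S - {f}) d v) \<or> (conn ends (?S - {f}) u d \<and> conn ends (?S - {f}) c v)"
      by blast
    then show ?thesis
    proof (elim disjE conjE)
      assume "conn ends (?S - {f}) u v" then show ?thesis using sub1 by blast
    next
      assume "conn ends (?S - {f}) u c" "conn ends (?S - {f}) d v"
      then have "conn ends ?S' u c" "conn ends ?S' d v" using sub1 by blast+
      then show ?thesis using ccd by (meson rtranclp_trans)
    next
      assume "conn ends (?S - {f}) u d" "conn ends (?S - {f}) c v"
      then have "conn ends ?S' u d" "conn ends ?S' c v" using sub1 by blast+
      then show ?thesis using ccd' by (meson rtranclp_trans)
    qed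
  qed
qed



definition inner :: "('x \<Rightarrow> 'v set) \<Rightarrow> ('v \<Rightarrow> 'v \<Rightarrow> bool) \<Rightarrow> 'x set \<Rightarrow> 'x set" where
  "inner ends R X = {x\<in>X. \<exists>c d. ends x = {c,d} \<and> R c d}"

fun rel :: "'v set \<Rightarrow> ('x \<Rightarrow> 'v set) \<Rightarrow> nat \<Rightarrow> (nat \<Rightarrow> 'x set) \<Rightarrow> nat \<Rightarrow> 'v \<Rightarrow> 'v \<Rightarrow> bool" where
  "rel V ends \<tau> Ts 0 = (\<lambda>u v. u \<in> V \<and> v \<in> V)"
| "rel V ends \<tau> Ts (Suc j) = (\<lambda>u v. u \<in> V \<and> v \<in> V \<and>
     (\<forall>l<\<tau>. conn ends (inner ends (rel V ends \<tau> Ts j) (Ts l)) u v))"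

lemma conn_inner:
  assumes sym: "\<And>p q. R p q \<Longrightarrow> R q p" and tr: "\<And>p q r. R p q \<Longrightarrow> R q r \<Longrightarrow> R p r"
    and "conn ends (inner ends R X) u v"
  shows "u = v \<or> R u v"
  using assms(3)
proof (induction rule: rtranclp_induct)
  case base then show ?case by simp
next
  case (step w v)
  then obtain x c d where x: "ends x = {w,v}" "ends x = {c,d}" "R c d" unfolding adj_def inner_def by auto
  then have "R w v" using sym by (auto simp: doubleton_eq_iff)
  then show ?case using step.IH tr by blast
qed

locale mg =
  fixes V :: "'v set" and ends :: "'x \<Rightarrow> 'v set" and M :: "'x set" and \<tau> :: nat
  assumes finV: "finite V" and finM: "finite M" and wfM: "wfe V ends M" and tau: "\<tau> \<ge> 1"
begin

abbreviation "R Ts j \<equiv> rel V ends \<tau> Ts j"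

lemma rel_V: "R Ts j u v \<Longrightarrow> u \<in> V \<and> v \<in> V"
  by (cases j) auto

lemma rel_refl: "u \<in> V \<Longrightarrow> R Ts j u u"
  by (cases j) auto

lemma rel_sym: "R Ts j u v \<Longrightarrow> R Ts j v u"
  by (cases j) (auto intro: conn_sym)

lemma rel_trans: "R Ts j u v \<Longrightarrow> R Ts j v w \<Longrightarrow> R Ts j u w"
  by (cases j) (auto intro: rtranclp_trans)

lemma rel_Suc_le: "R Ts (Suc j) u v \<Longrightarrow> R Ts j u v"
proof -
  assume h: "R Ts (Suc j) u v"
  then have uv: "u \<in> V" "v \<in> V" and c: "conn ends (inner ends (R Ts j) (Ts 0)) u v" using tau by auto
  from conn_inner[OF _ _ c] rel_sym rel_trans have "u = v \<or> R Ts j u v" by blast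
  then show ?thesis using rel_refl uv by auto
qed

lemma rel_persist: "R Ts j = R Ts (Suc j) \<Longrightarrow> R Ts (Suc j) = R Ts (Suc (Suc j))"
  by (simp only: rel.simps)

lemma rel_persist2: "R Ts j = R Ts (Suc j) \<Longrightarrow> j \<le> k \<Longrightarrow> R Ts k = R Ts (Suc k)"
proof (induction k)
  case 0 then show ?case by simp
next
  case (Suc k) then show ?case
    by (metis le_Suc_eq rel_persist)
qed

definition N where "N = card V * card V"

lemma rel_stable: "R Ts N = R Ts (Suc N)"
proof (rule ccontr)
  assume ne: "R Ts N \<noteq> R Ts (Suc N)"
  have allne: "R Ts j \<noteq> R Ts (Suc j)" if "j \<le> N" for j
    using rel_persist2 ne that by blast
  define S where "S j = {(u,v). R Ts j u v}" for j
  have SV: "S j \<subseteq> V \<times> V" for j unfolding S_def using rel_V by auto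
  have fS: "finite (S j)" for j using SV finV by (meson finite_SigmaI rev_finite_subset)
  have "card (S j) + j \<le> N" if "j \<le> Suc N" for j
    using that
  proof (induction j)
    case 0
    have "S 0 = V \<times> V" unfolding S_def by auto
    then show ?case unfolding N_def by (simp add: card_cartesian_product)
  next
    case (Suc j)
    have "S (Suc j) \<subseteq> S j" unfolding S_def using rel_Suc_le by auto
    moreover have "S (Suc j) \<noteq> S j"
    proof
      assume "S (Suc j) = S j"
      then have "R Ts (Suc j) = R Ts j" unfolding S_def by (auto simp: fun_eq_iff)
      then show False using allne[of j] Suc.prems by simp
    qed
    ultimately have "card (S (Suc j)) < card (S j)" using fS by (meson psubset_card_mono psubsetI)
    then show ?case using Suc by simp
  qed
  from this[of "Suc N"] show False by simp
qed

end

lemma first_fail: assumes "P 0" "\<not> P n" shows "\<exists>j<n. (\<forall>j'\<le>j. P j') \<and> \<not> P (Suc j)"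
proof -
  define m where "m = (LEAST m. \<not> P m)"
  have nm: "\<not> P m" unfolding m_def using assms(2) by (rule LeastI)
  have mn: "m \<le> n" unfolding m_def using assms(2) by (rule Least_le)
  have lt: "P k" if "k < m" for k using not_less_Least[of k "\<lambda>m. \<not> P m"] that unfolding m_def by blast
  have "m \<noteq> 0"
  proof
    assume "m = 0" then show False using nm assms(1) by simp
  qed
  then obtain j where j: "m = Suc j" by (cases m) auto
  show ?thesis using j nm mn lt by (intro exI[of _ j]) auto
qed

lemma lex_head: "h' < h \<Longrightarrow> length xs = length ys \<Longrightarrow> (h' # xs, h # ys) \<in> lex less_than"
  unfolding lex_conv by (auto intro!: exI[of _ "[]"])

lemma lex_step:
  assumes "j < n" "\<forall>j'<j. c' j' = c j'" "c' j < c j"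
  shows "(h # map c' [0..<n], h # map c [0..<n]) \<in> lex less_than"
proof -
  have sp: "[0..<n] = [0..<j] @ j # [Suc j..<n]"
    using assms(1) upt_add_eq_append[of 0 j "n - j"] upt_conv_Cons[of j n] by simp
  have "map c' [0..<j] = map c [0..<j]" using assms(2) by simp
  then show ?thesis unfolding lex_conv sp using assms(3)
    by (auto intro!: exI[of _ "h # map c [0..<j]"])
qed

definition cross :: "('x \<Rightarrow> 'v set) \<Rightarrow> 'v set set \<Rightarrow> 'x \<Rightarrow> bool" where
  "cross ends P x \<longleftrightarrow> \<not> (\<exists>B\<in>P. ends x \<subseteq> B)"

context mg begin

definition valid where
  "valid Ts \<longleftrightarrow> (\<forall>l<\<tau>. Ts l \<subseteq> M \<and> acyclic_edges ends (Ts l)) \<and> (\<forall>k<\<tau>. \<forall>l<\<tau>. k \<noteq> l \<longrightarrow> Ts k \<inter> Ts l = {})"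

definition cnt where
  "cnt Ts j = card {(l,u,v). l < \<tau> \<and> u \<in> V \<and> v \<in> V \<and> \<not> conn ends (inner ends (R Ts j) (Ts l)) u v}"

definition UU where "UU Ts = (\<Union>l<\<tau>. Ts l)"

definition mu where "mu Ts = (card M - card (UU Ts)) # map (cnt Ts) [0..<N]"

lemma M_edge: "x \<in> M \<Longrightarrow> \<exists>c d. ends x = {c,d} \<and> c \<in> V \<and> d \<in> V"
  using wfM unfolding wfe_def by auto

lemma valid_ed: assumes "valid Ts" "l < \<tau>" shows "\<forall>x\<in>Ts l. \<exists>c d. ends x = {c,d}"
proof
  fix x assume "x \<in> Ts l"
  then have "x \<in> M" using assms unfolding valid_def by auto
  then obtain c d where "ends x = {c,d}" using M_edge by blast
  then show "\<exists>c d. ends x = {c,d}" by blast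
qed

lemma UU_M: "valid Ts \<Longrightarrow> UU Ts \<subseteq> M"
  unfolding valid_def UU_def by auto

lemma cnt_fin: "finite {(l,u,v). l < \<tau> \<and> u \<in> V \<and> v \<in> V \<and> P l u v}"
proof -
  have "{(l,u,v). l < \<tau> \<and> u \<in> V \<and> v \<in> V \<and> P l u v} \<subseteq> {..<\<tau>} \<times> V \<times> V" by auto
  then show ?thesis using finV by (meson finite_SigmaI finite_lessThan rev_finite_subset)
qed

lemma key:
  assumes val: "valid Ts" and min: "\<forall>Ts'. valid Ts' \<longrightarrow> (mu Ts', mu Ts) \<notin> lex less_than"
    and xM: "x \<in> M" and xe: "ends x = {a,b}" and nR: "\<not> R Ts N a b"
  shows "x \<in> UU Ts"
proof (rule ccontr)
  assume xU: "x \<notin> UU Ts"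
  then have xnot: "\<forall>l<\<tau>. x \<notin> Ts l" unfolding UU_def by auto
  obtain c d where cd: "ends x = {c,d}" "c \<in> V" "d \<in> V" using M_edge[OF xM] by blast
  then have abV: "a \<in> V" "b \<in> V" using xe by (auto simp: doubleton_eq_iff)
  have "R Ts 0 a b" using abV by simp
  from first_fail[of "\<lambda>j. R Ts j a b", OF this nR]
  obtain j where jN: "j < N" and allj: "\<forall>j'\<le>j. R Ts j' a b" and nj: "\<not> R Ts (Suc j) a b" by blast
  from nj abV obtain i where i: "i < \<tau>" and ni: "\<not> conn ends (inner ends (R Ts j) (Ts i)) a b" by auto
  have acT: "acyclic_edges ends (Ts i)" and TM: "Ts i \<subseteq> M" using val i unfolding valid_def by auto
  have finT: "finite (Ts i)" using TM finM by (meson rev_finite_subset)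
  have edT: "\<forall>y\<in>Ts i. \<exists>c d. ends y = {c,d}" using valid_ed[OF val i] .
  have disj: "\<forall>k<\<tau>. \<forall>l<\<tau>. k \<noteq> l \<longrightarrow> Ts k \<inter> Ts l = {}" using val unfolding valid_def by auto
  have lenmu: "length (mu Ts') = length (mu Ts)" for Ts' unfolding mu_def by simp
  show False
  proof (cases "conn ends (Ts i) a b")
    case False
    define Ts' where "Ts' = Ts(i := insert x (Ts i))"
    have "valid Ts'"
      unfolding valid_def
    proof (intro conjI allI impI)
      fix l assume "l < \<tau>"
      then show "Ts' l \<subseteq> M" using val xM unfolding valid_def Ts'_def by auto
      show "acyclic_edges ends (Ts' l)"
        using \<open>l < \<tau>\<close> val add_acyclic[OF acT xe False] xnot i unfolding valid_def Ts'_def by auto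
    next
      fix k l assume "k < \<tau>" "l < \<tau>" "k \<noteq> l"
      then show "Ts' k \<inter> Ts' l = {}" using disj xnot unfolding Ts'_def by auto
    qed
    moreover have "(mu Ts', mu Ts) \<in> lex less_than"
    proof -
      have U': "UU Ts' = insert x (UU Ts)" unfolding UU_def Ts'_def using i by auto
      have finU: "finite (UU Ts)" using UU_M[OF val] finM by (meson rev_finite_subset)
      have "UU Ts' \<subseteq> M" using U' UU_M[OF val] xM by auto
      then have "card (UU Ts') \<le> card M" using finM by (rule card_mono[rotated])
      moreover have "card (UU Ts') = Suc (card (UU Ts))" using U' xU finU by simp
      ultimately have "card M - card (UU Ts') < card M - card (UU Ts)" by simp
      then show ?thesis unfolding mu_def by (intro lex_head) simp_all
    qed
    ultimately show False using min by blast
  next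
    case True
    define Q where "Q j' y = (\<exists>c d. ends y = {c,d} \<and> R Ts j' c d)" for j' y
    have innerQ: "inner ends (R Ts j') X = {y\<in>X. Q j' y}" for j' X unfolding inner_def Q_def by simp
    obtain f where fT: "f \<in> Ts i" and nQf: "\<not> Q j f" and nf: "\<not> conn ends (Ts i - {f}) a b"
      using remove_exists[OF acT edT finT True, of "Q j"] ni unfolding innerQ by blast
    define Ts' where "Ts' = Ts(i := insert x (Ts i - {f}))"
    have xf: "x \<noteq> f" using fT xnot i by auto
    have "valid Ts'"
      unfolding valid_def
    proof (intro conjI allI impI)
      fix l assume "l < \<tau>"
      then show "Ts' l \<subseteq> M" using val xM unfolding valid_def Ts'_def by auto
      have ac2: "acyclic_edges ends (Ts i - {f})" using acyclic_subset[OF acT] by blast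
      show "acyclic_edges ends (Ts' l)"
        using \<open>l < \<tau>\<close> val add_acyclic[OF ac2 xe nf] xnot i unfolding valid_def Ts'_def by auto
    next
      fix k l assume "k < \<tau>" "l < \<tau>" "k \<noteq> l"
      then show "Ts' k \<inter> Ts' l = {}" using disj xnot unfolding Ts'_def by auto
    qed
    moreover have "(mu Ts', mu Ts) \<in> lex less_than"
    proof -
      have fnot: "f \<notin> Ts l" if "l < \<tau>" "l \<noteq> i" for l using disj fT i that by blast
      have U': "UU Ts' = insert x (UU Ts - {f})" unfolding UU_def Ts'_def using i fnot by auto
      have finU: "finite (UU Ts)" using UU_M[OF val] finM by (meson rev_finite_subset)
      have fU: "f \<in> UU Ts" using fT i unfolding UU_def by auto
      have cardU: "card (UU Ts') = card (UU Ts)" using U' xU finU fU xf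
        by (simp add: card_insert_if) (metis Suc_pred card_gt_0_iff emptyE)
      have conn_eq: "conn ends (inner ends (R Ts j') (Ts' l)) = conn ends (inner ends (R Ts j') (Ts l))"
        if "j' < j" "l < \<tau>" for j' l
      proof (cases "l = i")
        case False then show ?thesis unfolding Ts'_def by simp
      next
        case True
        have "R Ts j' a b" using allj that(1) by simp
        then have Qx: "Q j' x" unfolding Q_def xe by blast
        have "conn ends (inner ends (R Ts j') (Ts i)) a b"
          using allj[rule_format, of "Suc j'"] that i by auto
        then have cab: "conn ends {y\<in>Ts i. Q j' y} a b" by (simp only: innerQ)
        show ?thesis using swap_conn[OF xe fT nf, of "Q j'", OF Qx cab edT] True
          unfolding innerQ Ts'_def by simp
      qed
      have Req: "R Ts' j' = R Ts j'" if "j' \<le> j" for j'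
        using that
      proof (induction j')
        case 0 then show ?case by simp
      next
        case (Suc j')
        then have h: "R Ts' j' = R Ts j'" by simp
        have "j' < j" using Suc.prems by simp
        then have "\<forall>l<\<tau>. conn ends (inner ends (R Ts' j') (Ts' l)) = conn ends (inner ends (R Ts j') (Ts l))"
          using conn_eq h by simp
        then show ?case by (auto intro!: ext)
      qed
      have cnt_eq: "\<forall>j'<j. cnt Ts' j' = cnt Ts j'"
      proof (intro allI impI)
        fix j' assume "j' < j"
        then show "cnt Ts' j' = cnt Ts j'"
          unfolding cnt_def using Req[of j'] conn_eq[of j'] by (intro arg_cong[where f=card]) auto
      qed
      have cnt_lt: "cnt Ts' j < cnt Ts j"
      proof -
        have Qx: "Q j x" unfolding Q_def using xe allj by auto
        have in': "inner ends (R Ts j) (Ts' i) = insert x (inner ends (R Ts j) (Ts i))"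
          unfolding innerQ Ts'_def using Qx nQf by auto
        have mono: "conn ends (inner ends (R Ts j) (Ts l)) u v \<Longrightarrow> conn ends (inner ends (R Ts j) (Ts' l)) u v" for l u v
        proof (cases "l = i")
          case True
          have "inner ends (R Ts j) (Ts i) \<subseteq> inner ends (R Ts j) (Ts' i)" using in' by auto
          then show "conn ends (inner ends (R Ts j) (Ts l)) u v \<Longrightarrow> conn ends (inner ends (R Ts j) (Ts' l)) u v"
            using True conn_mono by metis
        qed (simp add: Ts'_def)
        have new: "conn ends (inner ends (R Ts j) (Ts' i)) a b"
          unfolding in' by (rule adj_conn[of x _ ends a b]) (auto simp: xe)
        let ?A = "{(l,u,v). l < \<tau> \<and> u \<in> V \<and> v \<in> V \<and> \<not> conn ends (inner ends (R Ts' j) (Ts' l)) u v}"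
        let ?B = "{(l,u,v). l < \<tau> \<and> u \<in> V \<and> v \<in> V \<and> \<not> conn ends (inner ends (R Ts j) (Ts l)) u v}"
        have "?A \<subseteq> ?B" using Req[of j] mono by auto
        moreover have "(i,a,b) \<in> ?B - ?A" using i abV ni new Req[of j] by auto
        ultimately have "?A \<subset> ?B" by blast
        then show ?thesis unfolding cnt_def using cnt_fin by (meson psubset_card_mono)
      qed
      show ?thesis unfolding mu_def cardU by (rule lex_step[OF jN cnt_eq cnt_lt])
    qed
    ultimately show False using min by blast
  qed
qed



theorem nwt:
  assumes cond: "\<forall>P. is_partition V P \<longrightarrow> \<tau> * (card P - 1) \<le> card {x\<in>M. cross ends P x}"
  shows "has_disjoint_spanning_trees \<tau> V ends M"
proof (cases "V = {}")
  case True
  then have "M = {}" using M_edge by blast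
  then have "spanning_tree V ends M {}" using True
    unfolding spanning_tree_def graph_connected_def acyclic_edges_def by auto
  then show ?thesis unfolding has_disjoint_spanning_trees_def by (intro exI[of _ "\<lambda>_. {}"]) auto
next
  case False
  have v0: "valid (\<lambda>_. {})" unfolding valid_def acyclic_edges_def by auto
  have wf: "wf (inv_image (lex less_than) mu)" by (intro wf_inv_image wf_lex wf_less_than)
  obtain Ts where val: "valid Ts" and min0: "\<And>Ts'. (Ts', Ts) \<in> inv_image (lex less_than) mu \<Longrightarrow> Ts' \<notin> Collect valid"
    using wfE_min[OF wf, of "\<lambda>_. {}" "Collect valid"] v0 by blast
  have min: "\<forall>Ts'. valid Ts' \<longrightarrow> (mu Ts', mu Ts) \<notin> lex less_than" using min0 by auto
  define Rn where "Rn = R Ts N"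
  define P where "P = (\<lambda>v. {u\<in>V. Rn v u}) ` V"
  have Rn_V: "Rn u v \<Longrightarrow> u \<in> V \<and> v \<in> V" for u v unfolding Rn_def by (rule rel_V)
  have Rn_refl: "u \<in> V \<Longrightarrow> Rn u u" for u unfolding Rn_def by (rule rel_refl)
  have Rn_sym: "Rn u v \<Longrightarrow> Rn v u" for u v unfolding Rn_def by (rule rel_sym)
  have Rn_trans: "Rn u v \<Longrightarrow> Rn v w \<Longrightarrow> Rn u w" for u v w unfolding Rn_def by (rule rel_trans)
  have part: "is_partition V P"
    unfolding is_partition_def
  proof (intro conjI ballI impI)
    show "\<Union>P = V" unfolding P_def using Rn_refl by auto
    show "{} \<notin> P" unfolding P_def using Rn_refl by auto
  next
    fix A B assume A: "A \<in> P" and B: "B \<in> P" and AB: "A \<noteq> B"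
    show "A \<inter> B = {}"
    proof (rule ccontr)
      assume "A \<inter> B \<noteq> {}"
      then obtain w where w: "w \<in> A" "w \<in> B" by auto
      obtain v1 v2 where v: "A = {u\<in>V. Rn v1 u}" "B = {u\<in>V. Rn v2 u}" using A B unfolding P_def by auto
      have a1: "Rn v1 w" and a2: "Rn v2 w" using w v by auto
      have v12: "Rn v1 v2" using Rn_trans[OF a1 Rn_sym[OF a2]] .
      have v21: "Rn v2 v1" using Rn_trans[OF a2 Rn_sym[OF a1]] .
      have "Rn v1 u \<longleftrightarrow> Rn v2 u" for u using Rn_trans[OF v21] Rn_trans[OF v12] by blast
      then show False using AB v by auto
    qed
  qed
  have finP: "finite P" unfolding P_def using finV by simp
  have inner_iff: "(\<exists>c d. ends x = {c,d} \<and> Rn c d) \<longleftrightarrow> \<not> cross ends P x" if xM: "x \<in> M" for x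
  proof -
    obtain a b where ab: "ends x = {a,b}" "a \<in> V" "b \<in> V" using M_edge[OF xM] by blast
    have "(\<exists>c d. ends x = {c,d} \<and> Rn c d) \<longleftrightarrow> Rn a b"
      using ab Rn_sym by (auto simp: doubleton_eq_iff)
    also have "\<dots> \<longleftrightarrow> (\<exists>B\<in>P. ends x \<subseteq> B)"
    proof
      assume "Rn a b"
      then have "{a,b} \<subseteq> {u\<in>V. Rn a u}" using ab Rn_refl by auto
      then show "\<exists>B\<in>P. ends x \<subseteq> B" unfolding P_def using ab by auto
    next
      assume "\<exists>B\<in>P. ends x \<subseteq> B"
      then obtain v where "{a,b} \<subseteq> {u\<in>V. Rn v u}" using ab unfolding P_def by auto
      then have va: "Rn v a" and vb: "Rn v b" by auto
      show "Rn a b" using Rn_trans[OF Rn_sym[OF va] vb] .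
    qed
    finally show ?thesis unfolding cross_def by simp
  qed
  have crossU: "{x\<in>M. cross ends P x} \<subseteq> UU Ts"
  proof
    fix x assume x: "x \<in> {x\<in>M. cross ends P x}"
    then obtain a b where ab: "ends x = {a,b}" using M_edge by blast
    have "\<not> Rn a b" using inner_iff[of x] x ab by auto
    then show "x \<in> UU Ts" using key[OF val min _ ab] x unfolding Rn_def by auto
  qed
  have TM: "Ts l \<subseteq> M" and acT: "acyclic_edges ends (Ts l)" if "l < \<tau>" for l
    using val that unfolding valid_def by auto
  have finT: "finite (Ts l)" if "l < \<tau>" for l using TM[OF that] finM by (meson rev_finite_subset)
  have wfT: "wfe V ends X" if "X \<subseteq> M" for X using wfM that unfolding wfe_def by auto
  have stab: "Rn = R Ts (Suc N)" unfolding Rn_def by (rule rel_stable)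
  have compsT: "comps V ends (Ts l) + card (Ts l) = card V" if "l < \<tau>" for l
    using comps_acyclic[OF finT[OF that] finV wfT[OF TM[OF that]] acT[OF that]] .
  have compsI: "comps V ends (inner ends Rn (Ts l)) = card P" if l: "l < \<tau>" for l
  proof -
    have "cls V ends (inner ends Rn (Ts l)) v = {u\<in>V. Rn v u}" if "v \<in> V" for v
    proof -
      have "conn ends (inner ends Rn (Ts l)) v u \<longleftrightarrow> Rn v u" if "u \<in> V" for u
      proof
        assume "conn ends (inner ends Rn (Ts l)) v u"
        from conn_inner[of Rn, OF Rn_sym Rn_trans this] have "v = u \<or> Rn v u" .
        then show "Rn v u" using Rn_refl that by auto
      next
        assume "Rn v u"
        then have "R Ts (Suc N) v u" using stab by simp
        then show "conn ends (inner ends Rn (Ts l)) v u" using l unfolding Rn_def by simp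
      qed
      then show ?thesis unfolding cls_def by auto
    qed
    then have "cls V ends (inner ends Rn (Ts l)) ` V = P" unfolding P_def by simp
    then show ?thesis unfolding comps_def by simp
  qed
  have cardI: "card (inner ends Rn (Ts l)) = card V - card P" if l: "l < \<tau>" for l
  proof -
    have sub: "inner ends Rn (Ts l) \<subseteq> Ts l" unfolding inner_def by auto
    have "comps V ends (inner ends Rn (Ts l)) + card (inner ends Rn (Ts l)) = card V"
      by (rule comps_acyclic) (use sub finT[OF l] finV wfT TM[OF l] acyclic_subset[OF acT[OF l] sub] in \<open>auto intro: rev_finite_subset\<close>)
    then show ?thesis using compsI[OF l] by simp
  qed
  have splitT: "card (Ts l) = card (inner ends Rn (Ts l)) + card {x\<in>Ts l. cross ends P x}" if l: "l < \<tau>" for l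
  proof -
    have "Ts l = inner ends Rn (Ts l) \<union> {x\<in>Ts l. cross ends P x}"
      and "inner ends Rn (Ts l) \<inter> {x\<in>Ts l. cross ends P x} = {}"
    proof -
      have "\<forall>x\<in>Ts l. x \<in> inner ends Rn (Ts l) \<longleftrightarrow> \<not> cross ends P x"
        using inner_iff TM[OF l] unfolding inner_def by auto
      moreover have "inner ends Rn (Ts l) \<subseteq> Ts l" unfolding inner_def by auto
      ultimately show "Ts l = inner ends Rn (Ts l) \<union> {x\<in>Ts l. cross ends P x}"
        and "inner ends Rn (Ts l) \<inter> {x\<in>Ts l. cross ends P x} = {}" by blast+
    qed
    then show ?thesis using finT[OF l] card_Un_disjoint
      by (metis (no_types, lifting) finite_Un)
  qed
  have PV: "card P \<le> card V" unfolding P_def using finV by (rule card_image_le)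
  have P1: "card P \<ge> 1" using False finP unfolding P_def by (simp add: Suc_leI card_gt_0_iff)
  have crossSum: "(\<Sum>l<\<tau>. card {x\<in>Ts l. cross ends P x}) = card {x\<in>M. cross ends P x}"
  proof -
    have "(\<Sum>l<\<tau>. card {x\<in>Ts l. cross ends P x}) = card (\<Union>l<\<tau>. {x\<in>Ts l. cross ends P x})"
    proof (rule card_UN_disjoint[symmetric])
      show "finite {..<\<tau>}" by simp
      show "\<forall>i\<in>{..<\<tau>}. finite {x \<in> Ts i. cross ends P x}" using finT by simp
      have "\<forall>k<\<tau>. \<forall>l<\<tau>. k \<noteq> l \<longrightarrow> Ts k \<inter> Ts l = {}" using val unfolding valid_def by blast
      then show "\<forall>i\<in>{..<\<tau>}. \<forall>j\<in>{..<\<tau>}. i \<noteq> j \<longrightarrow> {x \<in> Ts i. cross ends P x} \<inter> {x \<in> Ts j. cross ends P x} = {}"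
        by auto
    qed
    also have "(\<Union>l<\<tau>. {x\<in>Ts l. cross ends P x}) = {x\<in>M. cross ends P x}"
      using crossU TM unfolding UU_def by auto
    finally show ?thesis .
  qed
  have sumT: "(\<Sum>l<\<tau>. card (Ts l)) \<ge> \<tau> * (card V - 1)"
  proof -
    have "(\<Sum>l<\<tau>. card (Ts l)) = (\<Sum>l<\<tau>. card V - card P) + (\<Sum>l<\<tau>. card {x\<in>Ts l. cross ends P x})"
      using splitT cardI by (simp add: sum.distrib)
    also have "\<dots> = \<tau> * (card V - card P) + card {x\<in>M. cross ends P x}" using crossSum by simp
    also have "\<dots> \<ge> \<tau> * (card V - card P) + \<tau> * (card P - 1)"
    proof -
      have "\<tau> * (card P - 1) \<le> card {x\<in>M. cross ends P x}" using cond part by blast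
      then show ?thesis by simp
    qed
    finally have "(\<Sum>l<\<tau>. card (Ts l)) \<ge> \<tau> * (card V - card P) + \<tau> * (card P - 1)" .
    moreover have "\<tau> * (card V - card P) + \<tau> * (card P - 1) = \<tau> * (card V - 1)"
    proof -
      have "card V - card P + (card P - 1) = card V - 1" using PV P1 by simp
      then show ?thesis by (metis add_mult_distrib2)
    qed
    ultimately show ?thesis by simp
  qed
  have leT: "card (Ts l) \<le> card V - 1" if "l < \<tau>" for l
    using compsT[OF that] comps_pos[OF finV False, of ends "Ts l"] by simp
  have eqT: "card (Ts l) = card V - 1" if l: "l < \<tau>" for l
  proof (rule ccontr)
    assume "card (Ts l) \<noteq> card V - 1"
    then have "card (Ts l) < card V - 1" using leT[OF l] by simp
    then have "(\<Sum>l<\<tau>. card (Ts l)) < (\<Sum>l<\<tau>. card V - 1)"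
      using leT l by (intro sum_strict_mono_ex1) auto
    then show False using sumT by simp
  qed
  have st: "spanning_tree V ends M (Ts l)" if l: "l < \<tau>" for l
  proof -
    have "comps V ends (Ts l) = 1" using compsT[OF l] eqT[OF l] comps_pos[OF finV False, of ends "Ts l"] by simp
    then have "graph_connected V ends (Ts l)" using comps_one_connected[OF False wfT[OF TM[OF l]]] by simp
    then show ?thesis unfolding spanning_tree_def using TM[OF l] acT[OF l] by simp
  qed
  show ?thesis unfolding has_disjoint_spanning_trees_def
    using st val unfolding valid_def by blast
qed

end


lemma finite_simple_edges: "finite e \<Longrightarrow> finite (simple_edges e)"
proof -
  assume "finite e"
  moreover have "simple_edges e \<subseteq> Pow e" unfolding simple_edges_def by auto
  ultimately show ?thesis by (meson finite_Pow_iff rev_finite_subset)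
qed

lemma adj_id: "adj id E a b \<longleftrightarrow> {a,b} \<in> E"
  unfolding adj_def by auto

lemma partition_finite: "is_partition V P \<Longrightarrow> finite V \<Longrightarrow> finite P"
  unfolding is_partition_def by (metis Sup_le_iff finite_Pow_iff rev_finite_subset subsetI Pow_iff)

lemma construct_edges:
  assumes ne: "e \<noteq> {}" and eV: "e \<subseteq> V" and part: "is_partition V P" and finV: "finite V"
  shows "\<exists>E. E \<subseteq> simple_edges e \<and> graph_connected e id E \<and> card {p\<in>E. cross id P p} \<le> parts_met e P - 1"
proof -
  define r where "r = (SOME v. v \<in> e)"
  have re: "r \<in> e" unfolding r_def using ne by (meson all_not_in_conv someI_ex)
  have cov: "\<Union>P = V" and disj: "\<forall>A\<in>P. \<forall>B\<in>P. A \<noteq> B \<longrightarrow> A \<inter> B = {}" using part unfolding is_partition_def by auto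
  obtain Br where Br: "Br \<in> P" "r \<in> Br" using cov eV re by auto
  have finP: "finite P" using partition_finite[OF part finV] .
  define \<rho> where "\<rho> B = (if r \<in> B then r else SOME v. v \<in> B \<inter> e)" for B
  have \<rho>_in: "\<rho> B \<in> B \<inter> e" if "B \<in> P" "B \<inter> e \<noteq> {}" for B
  proof (cases "r \<in> B")
    case True then show ?thesis unfolding \<rho>_def using re by auto
  next
    case False
    have "(SOME v. v \<in> B \<inter> e) \<in> B \<inter> e" using that by (meson all_not_in_conv someI_ex)
    then show ?thesis unfolding \<rho>_def using False by simp
  qed
  have \<rho>_Br: "\<rho> Br = r" unfolding \<rho>_def using Br by simp
  have r_notin: "r \<notin> B" if "B \<in> P" "B \<noteq> Br" for B using disj Br that by blast
  define E1 where "E1 = {{\<rho> B, v} | B v. B \<in> P \<and> v \<in> B \<inter> e \<and> v \<noteq> \<rho> B}"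
  define E2 where "E2 = (\<lambda>B. {r, \<rho> B}) ` {B\<in>P. B \<inter> e \<noteq> {} \<and> B \<noteq> Br}"
  define E where "E = E1 \<union> E2"
  have E1s: "E1 \<subseteq> simple_edges e"
  proof
    fix p assume "p \<in> E1"
    then obtain B v where "p = {\<rho> B, v}" "B \<in> P" "v \<in> B \<inter> e" "v \<noteq> \<rho> B" unfolding E1_def by blast
    moreover then have "\<rho> B \<in> B \<inter> e" using \<rho>_in by blast
    ultimately show "p \<in> simple_edges e" unfolding simple_edges_def by blast
  qed
  have E2s: "E2 \<subseteq> simple_edges e"
  proof
    fix p assume "p \<in> E2"
    then obtain B where B: "p = {r, \<rho> B}" "B \<in> P" "B \<inter> e \<noteq> {}" "B \<noteq> Br" unfolding E2_def by blast
    then have "\<rho> B \<in> B \<inter> e" using \<rho>_in by blast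
    moreover have "r \<notin> B" using r_notin B by blast
    ultimately show "p \<in> simple_edges e" unfolding simple_edges_def using B re by blast
  qed
  have Es: "E \<subseteq> simple_edges e" unfolding E_def using E1s E2s by blast
  have cr: "conn id E r u" if ue: "u \<in> e" for u
  proof -
    obtain B where B: "B \<in> P" "u \<in> B" using cov eV ue by auto
    have Be: "B \<inter> e \<noteq> {}" using B ue by auto
    have c1: "conn id E r (\<rho> B)"
    proof (cases "B = Br")
      case True then show ?thesis using \<rho>_Br by simp
    next
      case False
      then have "{r, \<rho> B} \<in> E" unfolding E_def E2_def using B Be by blast
      then show ?thesis by (simp add: adj_id r_into_rtranclp)
    qed
    have c2: "conn id E (\<rho> B) u"
    proof (cases "u = \<rho> B")
      case True then show ?thesis by simp
    next
      case False
      then have "{\<rho> B, u} \<in> E" unfolding E_def E1_def using B ue by blast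
      then show ?thesis by (simp add: adj_id r_into_rtranclp)
    qed
    show ?thesis using c1 c2 by (rule rtranclp_trans)
  qed
  have gc: "graph_connected e id E"
    unfolding graph_connected_def
  proof (intro conjI ballI)
    fix x assume "x \<in> E" then show "id x \<subseteq> e" using Es unfolding simple_edges_def by auto
  next
    fix u v assume "u \<in> e" "v \<in> e"
    then show "conn id E u v" using cr conn_sym rtranclp_trans by metis
  qed
  have "{p\<in>E. cross id P p} \<subseteq> E2"
  proof
    fix p assume p: "p \<in> {p\<in>E. cross id P p}"
    show "p \<in> E2"
    proof (rule ccontr)
      assume "p \<notin> E2"
      then have "p \<in> E1" using p unfolding E_def by auto
      then obtain B v where "p = {\<rho> B, v}" "B \<in> P" "v \<in> B \<inter> e" unfolding E1_def by blast
      moreover then have "\<rho> B \<in> B" using \<rho>_in by blast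
      ultimately show False using p unfolding cross_def by auto
    qed
  qed
  then have "card {p\<in>E. cross id P p} \<le> card E2" unfolding E2_def using finP by (intro card_mono) auto
  also have "\<dots> \<le> card {B\<in>P. B \<inter> e \<noteq> {} \<and> B \<noteq> Br}" unfolding E2_def by (rule card_image_le) (use finP in auto)
  also have "{B\<in>P. B \<inter> e \<noteq> {} \<and> B \<noteq> Br} = {B\<in>P. B \<inter> e \<noteq> {}} - {Br}" by auto
  also have "card \<dots> = parts_met e P - 1"
    unfolding parts_met_def using Br re finP by (subst card_Diff_singleton) auto
  finally show ?thesis using Es gc by blast
qed


lemma sigma_cross:
  assumes finI: "finite I" and fE: "\<forall>i\<in>I. finite (Es i)"
  shows "card {x\<in>(SIGMA i:I. Es i). cross snd P x} = (\<Sum>i\<in>I. card {p\<in>Es i. cross id P p})"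
proof -
  have "{x\<in>(SIGMA i:I. Es i). cross snd P x} = (SIGMA i:I. {p\<in>Es i. cross id P p})"
    unfolding cross_def by auto
  then show ?thesis using finI fE by simp
qed

lemma hyper_cross:
  assumes ic: "induced_choice I f Es" and i: "i \<in> I" and hg: "hypergraph V I f" and part: "is_partition V P"
  shows "parts_met (f i) P \<le> card {p\<in>Es i. cross id P p} + 1"
proof -
  have fi: "f i \<noteq> {}" "f i \<subseteq> V" "finite V" using hg i unfolding hypergraph_def by auto
  have finW: "finite (f i)" using fi by (meson rev_finite_subset)
  have Es: "Es i \<subseteq> simple_edges (f i)" and gc: "graph_connected (f i) id (Es i)" using ic i unfolding induced_choice_def by auto
  have finS: "finite (Es i)" using Es finite_simple_edges[OF finW] by (meson rev_finite_subset)
  have wf: "wfe (f i) id (Es i)" unfolding wfe_def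
  proof
    fix x assume "x \<in> Es i"
    then have "x \<in> simple_edges (f i)" using Es by auto
    then obtain u v where "x = {u,v}" "u \<in> f i" "v \<in> f i" unfolding simple_edges_def by auto
    then show "\<exists>a b. id x = {a, b} \<and> a \<in> f i \<and> b \<in> f i" by auto
  qed
  have disj: "\<forall>A\<in>P. \<forall>B\<in>P. A \<noteq> B \<longrightarrow> A \<inter> B = {}" and cov: "f i \<subseteq> \<Union>P" using part fi unfolding is_partition_def by auto
  from cross_bound[OF finW fi(1) finS wf gc disj cov]
  show ?thesis unfolding parts_met_def cross_def by simp
qed

theorem theorem9:
  fixes \<tau> :: nat and V :: "'v set" and I :: "'i set" and f :: "'i \<Rightarrow> 'v set"
  assumes "\<tau> \<ge> 1" and "hypergraph V I f"
  shows "inherently_connected \<tau> V I f \<longleftrightarrow>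
    (\<forall>P. is_partition V P \<longrightarrow>
       (\<Sum>i\<in>I. (int (parts_met (f i) P) - 1)) \<ge> int \<tau> * (int (card P) - 1))"
proof -
  have finV: "finite V" and finI: "finite I" and fI: "\<forall>i\<in>I. f i \<noteq> {} \<and> f i \<subseteq> V"
    using assms(2) unfolding hypergraph_def by auto
  have finf: "finite (f i)" if "i \<in> I" for i using fI finV that by (meson rev_finite_subset)
  have finEs: "\<forall>i\<in>I. finite (Es i)" if ic0: "induced_choice I f Es" for Es
  proof
    fix i assume i: "i \<in> I"
    then have "Es i \<subseteq> simple_edges (f i)" using ic0 unfolding induced_choice_def by auto
    moreover have "finite (simple_edges (f i))" using finite_simple_edges finf i by blast
    ultimately show "finite (Es i)" by (rule rev_finite_subset[rotated])
  qed
  have mgE: "mg V snd (SIGMA i:I. Es i) \<tau>" if ic: "induced_choice I f Es" for Es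
  proof
    show "finite V" by fact
    show "finite (SIGMA i:I. Es i)" using finI finEs[OF ic] by auto
    show "wfe V snd (SIGMA i:I. Es i)" unfolding wfe_def
    proof
      fix x assume "x \<in> (SIGMA i:I. Es i)"
      then obtain i p where ip: "x = (i,p)" "i \<in> I" "p \<in> Es i" by auto
      then have "p \<in> simple_edges (f i)" using ic unfolding induced_choice_def by auto
      then obtain u v where "p = {u,v}" "u \<in> f i" "v \<in> f i" unfolding simple_edges_def by auto
      then show "\<exists>a b. snd x = {a, b} \<and> a \<in> V \<and> b \<in> V" using ip fI by auto
    qed
    show "\<tau> \<ge> 1" by fact
  qed
  show ?thesis
  proof
    assume inh: "inherently_connected \<tau> V I f"
    show "\<forall>P. is_partition V P \<longrightarrow> (\<Sum>i\<in>I. (int (parts_met (f i) P) - 1)) \<ge> int \<tau> * (int (card P) - 1)"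
    proof (intro allI impI)
      fix P assume part: "is_partition V P"
      have finP: "finite P" using partition_finite[OF part finV] .
      show "(\<Sum>i\<in>I. (int (parts_met (f i) P) - 1)) \<ge> int \<tau> * (int (card P) - 1)"
      proof (cases "V = {}")
        case True
        then have "I = {}" using fI by auto
        moreover have "P = {}" using True part unfolding is_partition_def by auto
        ultimately show ?thesis by simp
      next
        case False
        have "\<forall>i\<in>I. \<exists>E. E \<subseteq> simple_edges (f i) \<and> graph_connected (f i) id E \<and> card {p\<in>E. cross id P p} \<le> parts_met (f i) P - 1"
        proof
          fix i assume i: "i \<in> I"
          then have "f i \<noteq> {}" "f i \<subseteq> V" using fI by auto
          from construct_edges[OF this part finV]
          show "\<exists>E. E \<subseteq> simple_edges (f i) \<and> graph_connected (f i) id E \<and> card {p\<in>E. cross id P p} \<le> parts_met (f i) P - 1" .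
        qed
        from bchoice[OF this] obtain Es where Es: "\<forall>i\<in>I. Es i \<subseteq> simple_edges (f i) \<and> graph_connected (f i) id (Es i) \<and> card {p\<in>Es i. cross id P p} \<le> parts_met (f i) P - 1"
          by blast
        have ic: "induced_choice I f Es" unfolding induced_choice_def using Es by blast
        interpret mg V snd "SIGMA i:I. Es i" \<tau> using mgE[OF ic] .
        define M where "M = (SIGMA i:I. Es i)"
        have "has_disjoint_spanning_trees \<tau> V snd M" using inh[unfolded inherently_connected_def, rule_format, OF ic] unfolding M_def .
        then obtain Ts where st: "\<forall>k<\<tau>. spanning_tree V snd M (Ts k)"
          and dj: "\<forall>k<\<tau>. \<forall>l<\<tau>. k \<noteq> l \<longrightarrow> Ts k \<inter> Ts l = {}"
          unfolding has_disjoint_spanning_trees_def by blast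
        have finM: "finite M" unfolding M_def by (rule finM)
        have cov: "\<Union>P = V" and disj: "\<forall>A\<in>P. \<forall>B\<in>P. A \<noteq> B \<longrightarrow> A \<inter> B = {}" and ne: "{} \<notin> P"
          using part unfolding is_partition_def by auto
        have PV: "{B\<in>P. B \<inter> V \<noteq> {}} = P"
        proof -
          have "B \<inter> V \<noteq> {}" if "B \<in> P" for B
          proof -
            have "B \<noteq> {}" using ne that by auto
            moreover have "B \<subseteq> V" using cov that by auto
            ultimately show ?thesis by auto
          qed
          then show ?thesis by auto
        qed
        have each: "card P \<le> card {x\<in>Ts l. cross snd P x} + 1" if l: "l < \<tau>" for l
        proof -
          have TM: "Ts l \<subseteq> M" and gc: "graph_connected V snd (Ts l)" using st l unfolding spanning_tree_def by auto
          have finT: "finite (Ts l)" using TM finM by (meson rev_finite_subset)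
          have wf: "wfe V snd (Ts l)" using wfM TM unfolding M_def wfe_def by auto
          from cross_bound[OF finV False finT wf gc disj] cov
          show ?thesis unfolding PV cross_def by simp
        qed
        have fin2: "finite {x\<in>Ts l. cross snd P x}" if "l < \<tau>" for l
        proof -
          have "Ts l \<subseteq> M" using st that unfolding spanning_tree_def by blast
          then have "finite (Ts l)" using finM by (rule rev_finite_subset[rotated])
          then show ?thesis by simp
        qed
        have "\<tau> * (card P - 1) \<le> (\<Sum>l<\<tau>. card {x\<in>Ts l. cross snd P x})"
        proof -
          have "(\<Sum>l<\<tau>. card P - 1) \<le> (\<Sum>l<\<tau>. card {x\<in>Ts l. cross snd P x})"
            using each by (intro sum_mono) (simp add: le_diff_conv)
          then show ?thesis by simp
        qed
        also have "\<dots> = card (\<Union>l<\<tau>. {x\<in>Ts l. cross snd P x})"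
        proof (rule card_UN_disjoint[symmetric])
          show "finite {..<\<tau>}" by simp
          show "\<forall>i\<in>{..<\<tau>}. finite {x \<in> Ts i. cross snd P x}" using fin2 by simp
          show "\<forall>i\<in>{..<\<tau>}. \<forall>j\<in>{..<\<tau>}. i \<noteq> j \<longrightarrow> {x \<in> Ts i. cross snd P x} \<inter> {x \<in> Ts j. cross snd P x} = {}"
            using dj by auto
        qed
        also have "\<dots> \<le> card {x\<in>M. cross snd P x}"
        proof (rule card_mono)
          show "finite {x\<in>M. cross snd P x}" using finM by simp
          show "(\<Union>l<\<tau>. {x\<in>Ts l. cross snd P x}) \<subseteq> {x\<in>M. cross snd P x}"
          proof
            fix x assume "x \<in> (\<Union>l<\<tau>. {x\<in>Ts l. cross snd P x})"
            then obtain l where "l < \<tau>" "x \<in> Ts l" "cross snd P x" by auto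
            moreover then have "Ts l \<subseteq> M" using st unfolding spanning_tree_def by blast
            ultimately show "x \<in> {x\<in>M. cross snd P x}" by auto
          qed
        qed
        also have "\<dots> = (\<Sum>i\<in>I. card {p\<in>Es i. cross id P p})"
          unfolding M_def by (rule sigma_cross[OF finI finEs[OF ic]])
        also have "\<dots> \<le> (\<Sum>i\<in>I. parts_met (f i) P - 1)"
          using Es by (intro sum_mono) blast
        finally have nat_ineq: "\<tau> * (card P - 1) \<le> (\<Sum>i\<in>I. parts_met (f i) P - 1)" .
        have pm1: "parts_met (f i) P \<ge> 1" if "i \<in> I" for i
        proof -
          have fi: "f i \<noteq> {}" "f i \<subseteq> V" using fI that by auto
          then obtain v where v: "v \<in> f i" by blast
          then have "v \<in> \<Union>P" using fi cov by auto
          then obtain B where B: "B \<in> P" "v \<in> B" by blast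
          have "B \<in> {B\<in>P. B \<inter> f i \<noteq> {}}" using B v by auto
          then have "{B\<in>P. B \<inter> f i \<noteq> {}} \<noteq> {}" by blast
          then show ?thesis unfolding parts_met_def using finP by (simp add: Suc_leI card_gt_0_iff)
        qed
        have "P \<noteq> {}" using False cov by auto
        then have P1: "card P \<ge> 1" using finP by (simp add: Suc_leI card_gt_0_iff)
        have "int \<tau> * (int (card P) - 1) = int (\<tau> * (card P - 1))" using P1 by (simp add: of_nat_diff)
        also have "\<dots> \<le> int (\<Sum>i\<in>I. parts_met (f i) P - 1)" using nat_ineq by (simp only: of_nat_le_iff)
        also have "\<dots> = (\<Sum>i\<in>I. int (parts_met (f i) P - 1))" by (rule of_nat_sum)
        also have "\<dots> = (\<Sum>i\<in>I. int (parts_met (f i) P) - 1)"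
          by (rule sum.cong) (use pm1 in \<open>auto simp: of_nat_diff\<close>)
        finally show ?thesis .
      qed
    qed
  next
    assume cond: "\<forall>P. is_partition V P \<longrightarrow> (\<Sum>i\<in>I. (int (parts_met (f i) P) - 1)) \<ge> int \<tau> * (int (card P) - 1)"
    show "inherently_connected \<tau> V I f"
      unfolding inherently_connected_def
    proof (intro allI impI)
      fix Es assume ic: "induced_choice I f Es"
      interpret mg V snd "SIGMA i:I. Es i" \<tau> using mgE[OF ic] .
      show "has_disjoint_spanning_trees \<tau> V snd (SIGMA i:I. Es i)"
      proof (rule nwt, intro allI impI)
        fix P assume part: "is_partition V P"
        have "int (\<tau> * (card P - 1)) \<le> int (card {x\<in>(SIGMA i:I. Es i). cross snd P x})"
        proof (cases "card P = 0")
          case True then show ?thesis by simp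
        next
          case False
          have "int (\<tau> * (card P - 1)) = int \<tau> * (int (card P) - 1)" using False by (simp add: of_nat_diff)
          also have "\<dots> \<le> (\<Sum>i\<in>I. (int (parts_met (f i) P) - 1))" using cond[rule_format, OF part] .
          also have "\<dots> \<le> (\<Sum>i\<in>I. int (card {p\<in>Es i. cross id P p}))"
          proof (rule sum_mono)
            fix i assume "i \<in> I"
            from hyper_cross[OF ic this assms(2) part]
            show "int (parts_met (f i) P) - 1 \<le> int (card {p\<in>Es i. cross id P p})" by linarith
          qed
          also have "\<dots> = int (card {x\<in>(SIGMA i:I. Es i). cross snd P x})"
            using sigma_cross[OF finI finEs[OF ic], of P] by (simp only: of_nat_sum)
          finally show ?thesis .
        qed
        then show "\<tau> * (card P - 1) \<le> card {x\<in>(SIGMA i:I. Es i). cross snd P x}" by (simp only: of_nat_le_iff)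
      qed
    qed
  qed
qed


end
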